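(* Let $D$ be a tournament missing disjoint paths of length 2, and let $C=a_1b_1c_1,\dots,a_kb_kc_k$ be a double cycle in $\Delta(D)$. Then there exists $s\in\{1,\dots,k\}$ such that $|N^+_{D[K(C)]}(a_s)|\le|N^{++}_{D[K(C)]}(a_s)|$ or $|N^+_{D[K(C)]}(c_s)|\le|N^{++}_{D[K(C)]}(c_s)|$.
   Context: All digraphs are finite oriented graphs; $D[X]$ is the subdigraph induced by $X$. $N^+_H(v)$ is the out-neighborhood in $H$; $N^{++}_H(v)$ is the set of vertices $w\notin N_H^+(v)\cup\{v\}$ with $u\to w$ in $H$ for some $u\in N_H^+(v)$. A missing edge is a pair of distinct non-adjacent vertices; the missing graph is formed by the missing edges. $D$ is a tournament missing disjoint paths of length 2 if its missing graph is a vertex-disjoint union of paths each with exactly two edges. For missing edges $\{x,y\},\{a,b\}$, $\{x,y\}$ loses to $\{a,b\}$ (written $xy\to ab$) if the endpoints can be labelled so that $x\to a$, $b\notin N^+(x)\cup N^{++}(x)$, $y\to b$, $a\notin N^+(y)\cup N^{++}(y)$ (neighborhoods in $D$). $\Delta(D)$ has the missing edges as vertices and arcs $(e,e')$ whenever $e$ loses to $e'$. For missing paths $abc$, $xyz$ (edges $ab,bc$ and $xy,yz$), $abc\to xyz$ means each of $ab,bc$ loses to each of $xy,yz$. A double cycle is a sequence $C=a_1b_1c_1,\dots,a_kb_kc_k$ ($k\ge2$) of distinct missing paths of length 2 (components of the missing graph) with $a_ib_ic_i\to a_{i+1}b_{i+1}c_{i+1}$ for all $i$, indices modulo $k$. $K(C)=\{a_i,b_i,c_i: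 1\le i\le k\}$. *)

theory Defs
  imports Main
begin

definition oriented_graph :: "'a set \<Rightarrow> ('a \<Rightarrow> 'a \<Rightarrow> bool) \<Rightarrow> bool" where
  "oriented_graph V A \<longleftrightarrow> finite V \<and> (\<forall>u v. A u v \<longrightarrow> u \<in> V \<and> v \<in> V)
     \<and> (\<forall>v. \<not> A v v) \<and> (\<forall>u v. A u v \<longrightarrow> \<not> A v u)"

definition outN :: "'a set \<Rightarrow> ('a \<Rightarrow> 'a \<Rightarrow> bool) \<Rightarrow> 'a \<Rightarrow> 'a set" where
  "outN X A v = {w \<in> X. A v w}"

definition secN :: "'a set \<Rightarrow> ('a \<Rightarrow> 'a \<Rightarrow> bool) \<Rightarrow> 'a \<Rightarrow> 'a set" where
  "secN X A v = {w \<in> X. w \<notin> outN X A v \<and> w \<noteq> v \<and> (\<exists>u \<in> outN X A v. A u w)}"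

definition missing :: "'a set \<Rightarrow> ('a \<Rightarrow> 'a \<Rightarrow> bool) \<Rightarrow> 'a \<Rightarrow> 'a \<Rightarrow> bool" where
  "missing V A x y \<longleftrightarrow> x \<in> V \<and> y \<in> V \<and> x \<noteq> y \<and> \<not> A x y \<and> \<not> A y x"

text \<open>abc is a component of the missing graph which is a path with exactly the two edges ab, bc.\<close>
definition missing_path :: "'a set \<Rightarrow> ('a \<Rightarrow> 'a \<Rightarrow> bool) \<Rightarrow> 'a \<Rightarrow> 'a \<Rightarrow> 'a \<Rightarrow> bool" where
  "missing_path V A a b c \<longleftrightarrow> missing V A a b \<and> missing V A b c \<and> a \<noteq> c \<and> \<not> missing V A a c
     \<and> (\<forall>x y. missing V A x y \<and> (x \<in> {a,b,c} \<or> y \<in> {a,b,c})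
              \<longrightarrow> {x,y} = {a,b} \<or> {x,y} = {b,c})"

definition tournament_missing_P2s :: "'a set \<Rightarrow> ('a \<Rightarrow> 'a \<Rightarrow> bool) \<Rightarrow> bool" where
  "tournament_missing_P2s V A \<longleftrightarrow> oriented_graph V A \<and>
     (\<forall>x y. missing V A x y \<longrightarrow> (\<exists>a b c. missing_path V A a b c \<and> x \<in> {a,b,c} \<and> y \<in> {a,b,c}))"

text \<open>Missing edge e loses to missing edge e' (neighbourhoods taken in D).\<close>
definition loses :: "'a set \<Rightarrow> ('a \<Rightarrow> 'a \<Rightarrow> bool) \<Rightarrow> 'a set \<Rightarrow> 'a set \<Rightarrow> bool" where
  "loses V A e e' \<longleftrightarrow> (\<exists>x y p q. e = {x,y} \<and> e' = {p,q} \<and>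
      A x p \<and> q \<notin> outN V A x \<union> secN V A x \<and> A y q \<and> p \<notin> outN V A y \<union> secN V A y)"

definition path_loses :: "'a set \<Rightarrow> ('a \<Rightarrow> 'a \<Rightarrow> bool) \<Rightarrow> 'a \<times> 'a \<times> 'a \<Rightarrow> 'a \<times> 'a \<times> 'a \<Rightarrow> bool" where
  "path_loses V A P Q \<longleftrightarrow> (case P of (a,b,c) \<Rightarrow> case Q of (x,y,z) \<Rightarrow>
      (\<forall>e \<in> {{a,b},{b,c}}. \<forall>e' \<in> {{x,y},{y,z}}. loses V A e e'))"

text \<open>Double cycle, indexed 0..k-1 (indices mod k).\<close>
definition double_cycle :: "'a set \<Rightarrow> ('a \<Rightarrow> 'a \<Rightarrow> bool) \<Rightarrow> nat \<Rightarrow> (nat \<Rightarrow> 'a) \<Rightarrow> (nat \<Rightarrow> 'a) \<Rightarrow> (nat \<Rightarrow> 'a) \<Rightarrow> bool" where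
  "double_cycle V A k a b c \<longleftrightarrow> k \<ge> 2
     \<and> (\<forall>i<k. missing_path V A (a i) (b i) (c i))
     \<and> (\<forall>i<k. \<forall>j<k. i \<noteq> j \<longrightarrow> {a i, b i, c i} \<noteq> {a j, b j, c j})
     \<and> (\<forall>i<k. path_loses V A (a i, b i, c i) (a (Suc i mod k), b (Suc i mod k), c (Suc i mod k)))"

definition Kset :: "nat \<Rightarrow> (nat \<Rightarrow> 'a) \<Rightarrow> (nat \<Rightarrow> 'a) \<Rightarrow> (nat \<Rightarrow> 'a) \<Rightarrow> 'a set" where
  "Kset k a b c = (\<Union>i<k. {a i, b i, c i})"

end

theory Submission
  imports Defs
begin


definition Xc :: "('v \<Rightarrow> 'v \<Rightarrow> bool) \<Rightarrow> 'v \<Rightarrow> 'v \<Rightarrow> bool" where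
  "Xc A x q \<longleftrightarrow> \<not> A x q \<and> (\<forall>u. A x u \<longrightarrow> \<not> A u q)"

lemma missing_sym: "missing V A x y \<Longrightarrow> missing V A y x"
  unfolding missing_def by auto

lemma Xc_intro:
  assumes og: "oriented_graph V A" and "q \<in> V" "q \<noteq> x" "q \<notin> outN V A x \<union> secN V A x"
  shows "Xc A x q"
  using assms unfolding Xc_def outN_def secN_def oriented_graph_def by blast

lemma loses_cases:
  assumes "loses V A {x1,y1} {p1,q1}" "x1 \<noteq> y1" "p1 \<noteq> q1"
  shows "(A x1 p1 \<and> q1 \<notin> outN V A x1 \<union> secN V A x1 \<and> A y1 q1 \<and> p1 \<notin> outN V A y1 \<union> secN V A y1)
       \<or> (A x1 q1 \<and> p1 \<notin> outN V A x1 \<union> secN V A x1 \<and> A y1 p1 \<and> q1 \<notin> outN V A y1 \<union> secN V A y1)"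
  using assms unfolding loses_def doubleton_eq_iff by auto

locale DC =
  fixes V :: "'v set" and A :: "'v \<Rightarrow> 'v \<Rightarrow> bool" and k :: nat and a b c :: "nat \<Rightarrow> 'v"
  assumes TM: "tournament_missing_P2s V A" and DCy: "double_cycle V A k a b c"
begin

definition P :: "nat \<Rightarrow> 'v set" where "P i = {a i, b i, c i}"
definition nx :: "nat \<Rightarrow> nat" where "nx i = Suc i mod k"

lemma og: "oriented_graph V A" using TM unfolding tournament_missing_P2s_def by auto
lemma k2: "2 \<le> k" using DCy unfolding double_cycle_def by auto
lemma mp: "i < k \<Longrightarrow> missing_path V A (a i) (b i) (c i)" using DCy unfolding double_cycle_def by auto
lemma dist: "i < k \<Longrightarrow> j < k \<Longrightarrow> i \<noteq> j \<Longrightarrow> P i \<noteq> P j" using DCy unfolding double_cycle_def P_def by auto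
lemma pl: "i < k \<Longrightarrow> path_loses V A (a i, b i, c i) (a (nx i), b (nx i), c (nx i))"
  using DCy unfolding double_cycle_def nx_def by auto

lemma irr: "\<not> A x x" using og unfolding oriented_graph_def by auto
lemma asym: "A x y \<Longrightarrow> \<not> A y x" using og unfolding oriented_graph_def by auto
lemma inV: "A x y \<Longrightarrow> x \<in> V \<and> y \<in> V" using og unfolding oriented_graph_def by auto

lemma basic:
  assumes "i < k"
  shows "a i \<in> V" "b i \<in> V" "c i \<in> V" "a i \<noteq> b i" "b i \<noteq> c i" "a i \<noteq> c i"
    "\<not> A (a i) (b i)" "\<not> A (b i) (a i)" "\<not> A (b i) (c i)" "\<not> A (c i) (b i)"
    "A (a i) (c i) \<or> A (c i) (a i)"
  using mp[OF assms] unfolding missing_path_def missing_def by auto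

lemma clause: "i < k \<Longrightarrow> missing V A x y \<Longrightarrow> x \<in> P i \<or> y \<in> P i \<Longrightarrow> {x,y} = {a i, b i} \<or> {x,y} = {b i, c i}"
proof -
  assume "i < k" "missing V A x y" "x \<in> P i \<or> y \<in> P i"
  moreover have "\<forall>x y. missing V A x y \<and> (x \<in> {a i, b i, c i} \<or> y \<in> {a i, b i, c i}) \<longrightarrow> {x,y} = {a i, b i} \<or> {x,y} = {b i, c i}"
    using mp[OF \<open>i < k\<close>] unfolding missing_path_def by (elim conjE) assumption
  ultimately show ?thesis unfolding P_def by blast
qed

lemma sub_lem:
  assumes "i < k" "j < k" "x \<in> P i" "x \<in> P j"
  shows "P i \<subseteq> P j"
proof -
  have mab: "missing V A (a i) (b i)" and mbc: "missing V A (b i) (c i)"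
    using mp[OF assms(1)] unfolding missing_path_def by auto
  have bj: "b i \<in> P j"
  proof -
    consider "x = a i" | "x = b i" | "x = c i" using assms(3) unfolding P_def by auto
    then show ?thesis
    proof cases
      case 1 then show ?thesis using clause[OF assms(2) mab] assms(4) unfolding P_def doubleton_eq_iff by auto
    next
      case 2 then show ?thesis using assms(4) by simp
    next
      case 3 then show ?thesis using clause[OF assms(2) mbc] assms(4) unfolding P_def doubleton_eq_iff by auto
    qed
  qed
  have "a i \<in> P j" using clause[OF assms(2) mab] bj unfolding P_def doubleton_eq_iff by auto
  moreover have "c i \<in> P j" using clause[OF assms(2) mbc] bj unfolding P_def doubleton_eq_iff by auto
  ultimately show ?thesis using bj unfolding P_def by auto
qed

lemma disj: "i < k \<Longrightarrow> j < k \<Longrightarrow> i \<noteq> j \<Longrightarrow> P i \<inter> P j = {}"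
  using sub_lem dist by blast

lemma PV: "i < k \<Longrightarrow> x \<in> P i \<Longrightarrow> x \<in> V" using basic unfolding P_def by auto

lemma adj:
  assumes "i < k" "j < k" "i \<noteq> j" "x \<in> P i" "y \<in> P j"
  shows "A x y \<or> A y x"
proof (rule ccontr)
  assume h: "\<not> (A x y \<or> A y x)"
  have "x \<noteq> y" using disj[OF assms(1-3)] assms(4,5) by auto
  then have "missing V A x y" using h PV assms unfolding missing_def by auto
  then have "y \<in> P i" using clause[OF assms(1)] assms(4) unfolding P_def doubleton_eq_iff by auto
  then show False using disj[OF assms(1-3)] assms(5) by auto
qed

lemma neq: "i < k \<Longrightarrow> j < k \<Longrightarrow> i \<noteq> j \<Longrightarrow> x \<in> P i \<Longrightarrow> y \<in> P j \<Longrightarrow> x \<noteq> y"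
  using disj by auto

lemma nx_lt: "nx i < k" using k2 unfolding nx_def by auto
lemma nx_neq: "i < k \<Longrightarrow> nx i \<noteq> i"
proof (cases "Suc i < k")
  case False
  assume "i < k"
  then have "Suc i = k" using False by simp
  then show ?thesis using k2 by (simp add: nx_def)
qed (simp add: nx_def)

end

context DC begin

definition SA :: "nat \<Rightarrow> bool" where
  "SA i \<longleftrightarrow> A (b i) (b (nx i)) \<and> A (a i) (a (nx i)) \<and> A (a i) (c (nx i)) \<and> A (c i) (a (nx i)) \<and> A (c i) (c (nx i))
     \<and> A (b (nx i)) (a i) \<and> A (b (nx i)) (c i) \<and> A (a (nx i)) (b i) \<and> A (c (nx i)) (b i)
     \<and> Xc A (a i) (b (nx i)) \<and> Xc A (c i) (b (nx i)) \<and> Xc A (b i) (a (nx i)) \<and> Xc A (b i) (c (nx i))"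

definition SB :: "nat \<Rightarrow> bool" where
  "SB i \<longleftrightarrow> A (b i) (a (nx i)) \<and> A (b i) (c (nx i)) \<and> A (a i) (b (nx i)) \<and> A (c i) (b (nx i))
     \<and> A (b (nx i)) (b i) \<and> A (a (nx i)) (a i) \<and> A (a (nx i)) (c i) \<and> A (c (nx i)) (a i) \<and> A (c (nx i)) (c i)
     \<and> Xc A (b i) (b (nx i)) \<and> Xc A (a i) (a (nx i)) \<and> Xc A (a i) (c (nx i)) \<and> Xc A (c i) (a (nx i)) \<and> Xc A (c i) (c (nx i))"

lemma XcD: "Xc A x q \<Longrightarrow> \<not> A x q" unfolding Xc_def by auto

lemma step: assumes i: "i < k" shows "SA i \<or> SB i"
proof -
  define j where "j = nx i"
  have j: "j < k" "j \<noteq> i" using nx_lt nx_neq[OF i] unfolding j_def by auto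
  have cv: "\<And>x q. x \<in> P i \<Longrightarrow> q \<in> P j \<Longrightarrow> q \<notin> outN V A x \<union> secN V A x \<Longrightarrow> Xc A x q"
    using Xc_intro[OF og] PV neq i j by metis
  have L: "\<And>e e'. e \<in> {{a i, b i}, {b i, c i}} \<Longrightarrow> e' \<in> {{a j, b j}, {b j, c j}} \<Longrightarrow> loses V A e e'"
    using pl[OF i] unfolding path_loses_def j_def by auto
  note bi = basic[OF i] and bj = basic[OF j(1)]
  have Pi: "a i \<in> P i" "b i \<in> P i" "c i \<in> P i" and Pj: "a j \<in> P j" "b j \<in> P j" "c j \<in> P j" unfolding P_def by auto
  have d1: "(A (a i) (a j) \<and> Xc A (a i) (b j) \<and> A (b i) (b j) \<and> Xc A (b i) (a j))
      \<or> (A (a i) (b j) \<and> Xc A (a i) (a j) \<and> A (b i) (a j) \<and> Xc A (b i) (b j))"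
    using loses_cases[OF L[of "{a i, b i}" "{a j, b j}"]] bi bj cv Pi Pj by blast
  have d2: "(A (a i) (b j) \<and> Xc A (a i) (c j) \<and> A (b i) (c j) \<and> Xc A (b i) (b j))
      \<or> (A (a i) (c j) \<and> Xc A (a i) (b j) \<and> A (b i) (b j) \<and> Xc A (b i) (c j))"
    using loses_cases[OF L[of "{a i, b i}" "{b j, c j}"]] bi bj cv Pi Pj by blast
  have d3: "(A (b i) (a j) \<and> Xc A (b i) (b j) \<and> A (c i) (b j) \<and> Xc A (c i) (a j))
      \<or> (A (b i) (b j) \<and> Xc A (b i) (a j) \<and> A (c i) (a j) \<and> Xc A (c i) (b j))"
    using loses_cases[OF L[of "{b i, c i}" "{a j, b j}"]] bi bj cv Pi Pj by blast
  have d4: "(A (b i) (b j) \<and> Xc A (b i) (c j) \<and> A (c i) (c j) \<and> Xc A (c i) (b j))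
      \<or> (A (b i) (c j) \<and> Xc A (b i) (b j) \<and> A (c i) (b j) \<and> Xc A (c i) (c j))"
    using loses_cases[OF L[of "{b i, c i}" "{b j, c j}"]] bi bj cv Pi Pj by blast
  have ad: "\<And>x y. x \<in> P i \<Longrightarrow> y \<in> P j \<Longrightarrow> A x y \<or> A y x" using adj i j by blast
  have ad9: "A (a i) (a j) \<or> A (a j) (a i)" "A (a i) (b j) \<or> A (b j) (a i)" "A (a i) (c j) \<or> A (c j) (a i)"
    "A (b i) (a j) \<or> A (a j) (b i)" "A (b i) (b j) \<or> A (b j) (b i)" "A (b i) (c j) \<or> A (c j) (b i)"
    "A (c i) (a j) \<or> A (a j) (c i)" "A (c i) (b j) \<or> A (b j) (c i)" "A (c i) (c j) \<or> A (c j) (c i)"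
    using ad Pi Pj by blast+
  show ?thesis
  proof (cases "A (b i) (b j)")
    case True
    then have "SA i" using d1 d2 d3 d4 ad9 XcD asym unfolding SA_def j_def[symmetric] by metis
    then show ?thesis ..
  next
    case False
    then have "SB i" using d1 d2 d3 d4 ad9 XcD asym unfolding SB_def j_def[symmetric] by metis
    then show ?thesis ..
  qed
qed

end

context DC begin

lemma modd_neq: assumes "s < k" "1 \<le> d" "d < k" shows "(s + d) mod k \<noteq> s"
proof (cases "s + d < k")
  case True then show ?thesis using assms by simp
next
  case False
  then have "(s + d) mod k = s + d - k" using assms by (simp add: le_mod_geq)
  then show ?thesis using assms False by simp
qed

lemma cover: assumes "Q < k" "Q \<noteq> s" "s < k" shows "\<exists>d. 1 \<le> d \<and> d < k \<and> Q = (s + d) mod k"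
proof (cases "s < Q")
  case True then show ?thesis using assms by (intro exI[of _ "Q - s"]) auto
next
  case False
  have "s + (Q + k - s) = Q + k" using assms by simp
  then have "(s + (Q + k - s)) mod k = Q" using assms by simp
  then show ?thesis using assms False by (intro exI[of _ "Q + k - s"]) auto
qed

lemma nx_mod: "nx ((s + d) mod k) = (s + Suc d) mod k"
  unfolding nx_def by (simp add: mod_Suc_eq)

lemma cyc_fwd:
  assumes s: "s < k" and base: "Pr (nx s)"
    and stp: "\<And>i. i < k \<Longrightarrow> i \<noteq> s \<Longrightarrow> nx i \<noteq> s \<Longrightarrow> Pr i \<Longrightarrow> Pr (nx i)"
  shows "Q < k \<Longrightarrow> Q \<noteq> s \<Longrightarrow> Pr Q"
proof -
  have "\<forall>d. 1 \<le> d \<longrightarrow> d < k \<longrightarrow> Pr ((s + d) mod k)"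
  proof
    fix d show "1 \<le> d \<longrightarrow> d < k \<longrightarrow> Pr ((s + d) mod k)"
    proof (induction d)
      case 0 then show ?case by simp
    next
      case (Suc d)
      show ?case
      proof (cases "d = 0")
        case True then show ?thesis using base unfolding nx_def by simp
      next
        case False
        show ?thesis
        proof (intro impI)
          assume "Suc d < k"
          then have h: "Pr ((s + d) mod k)" using Suc False by simp
          have "(s + d) mod k \<noteq> s" using modd_neq[OF s] False \<open>Suc d < k\<close> by simp
          moreover have "(s + Suc d) mod k \<noteq> s" using modd_neq[OF s, of "Suc d"] \<open>Suc d < k\<close> by simp
          moreover have lt: "(s + d) mod k < k" using k2 by simp
          ultimately have "Pr (nx ((s + d) mod k))" using stp h nx_mod by metis
          then show "Pr ((s + Suc d) mod k)" using nx_mod by simp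
        qed
      qed
    qed
  qed
  then show "Q < k \<Longrightarrow> Q \<noteq> s \<Longrightarrow> Pr Q" using cover s by metis
qed

lemma cyc_bwd:
  assumes s: "s < k" and base: "\<And>i. i < k \<Longrightarrow> nx i = s \<Longrightarrow> Pr i"
    and stp: "\<And>i. i < k \<Longrightarrow> i \<noteq> s \<Longrightarrow> nx i \<noteq> s \<Longrightarrow> Pr (nx i) \<Longrightarrow> Pr i"
  shows "Q < k \<Longrightarrow> Q \<noteq> s \<Longrightarrow> Pr Q"
proof -
  have kp: "0 < k" using k2 by simp
  have "\<forall>n. n < k - 1 \<longrightarrow> Pr ((s + (k - 1 - n)) mod k)"
  proof
    fix n show "n < k - 1 \<longrightarrow> Pr ((s + (k - 1 - n)) mod k)"
    proof (induction n)
      case 0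
      have "nx ((s + (k - 1)) mod k) = (s + Suc (k - 1)) mod k" by (rule nx_mod)
      also have "\<dots> = s" using kp s by simp
      finally show ?case using base kp by simp
    next
      case (Suc n)
      show ?case
      proof
        assume h: "Suc n < k - 1"
        define d where "d = k - 1 - Suc n"
        have d1: "1 \<le> d" "d < k" using h unfolding d_def by auto
        have sd: "Suc d = k - 1 - n" using h unfolding d_def by simp
        have "Pr ((s + Suc d) mod k)" using Suc h sd by simp
        moreover have "(s + d) mod k \<noteq> s" using modd_neq[OF s d1] .
        moreover have "(s + Suc d) mod k \<noteq> s" using modd_neq[OF s, of "Suc d"] h sd by simp
        ultimately have "Pr ((s + d) mod k)" using stp[of "(s + d) mod k"] nx_mod kp by simp
        then show "Pr ((s + (k - 1 - Suc n)) mod k)" unfolding d_def .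
      qed
    qed
  qed
  then have all: "\<forall>d. 1 \<le> d \<longrightarrow> d < k \<longrightarrow> Pr ((s + d) mod k)"
  proof (intro allI impI)
    fix d assume "\<forall>n. n < k - 1 \<longrightarrow> Pr ((s + (k - 1 - n)) mod k)" "1 \<le> d" "d < k"
    moreover have "k - 1 - d < k - 1" "k - 1 - (k - 1 - d) = d" using \<open>1 \<le> d\<close> \<open>d < k\<close> by auto
    ultimately show "Pr ((s + d) mod k)" by metis
  qed
  then show "Q < k \<Longrightarrow> Q \<noteq> s \<Longrightarrow> Pr Q" using cover s by metis
qed

end

context DC begin

definition FW1 where "FW1 s Q \<longleftrightarrow> A (a Q) (a s) \<and> A (c Q) (a s) \<and> A (a Q) (c s) \<and> A (c Q) (c s)"
definition FW2 where "FW2 s Q \<longleftrightarrow> A (b Q) (a s) \<and> A (b Q) (c s)"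

lemma inP: "a i \<in> P i" "b i \<in> P i" "c i \<in> P i" unfolding P_def by auto

lemma pf: "Xc A x q \<Longrightarrow> A x w \<Longrightarrow> q \<in> P j \<Longrightarrow> w \<in> P s \<Longrightarrow> j < k \<Longrightarrow> s < k \<Longrightarrow> j \<noteq> s \<Longrightarrow> A q w"
  unfolding Xc_def using adj by blast
lemma pb: "Xc A x q \<Longrightarrow> A w q \<Longrightarrow> x \<in> P i \<Longrightarrow> w \<in> P s \<Longrightarrow> i < k \<Longrightarrow> s < k \<Longrightarrow> i \<noteq> s \<Longrightarrow> A w x"
  unfolding Xc_def using adj by blast

lemma fw: assumes s: "s < k" shows "Q < k \<Longrightarrow> Q \<noteq> s \<Longrightarrow> FW1 s Q \<or> FW2 s Q"
proof (rule cyc_fwd[OF s, where Pr = "\<lambda>Q. FW1 s Q \<or> FW2 s Q"])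
  show "FW1 s (nx s) \<or> FW2 s (nx s)" using step[OF s] unfolding SA_def SB_def FW1_def FW2_def by auto
next
  fix i assume i: "i < k" "i \<noteq> s" "nx i \<noteq> s" and h: "FW1 s i \<or> FW2 s i"
  have j: "nx i < k" by (rule nx_lt)
  note pf' = pf[OF _ _ _ _ j s i(3)]
  have ws: "a s \<in> P s" "c s \<in> P s" by (rule inP)+
  consider "SA i" | "SB i" using step[OF i(1)] by blast
  then show "FW1 s (nx i) \<or> FW2 s (nx i)"
  proof cases
    case 1
    show ?thesis using h
    proof
      assume "FW1 s i"
      then have "FW2 s (nx i)" using 1 pf'[OF _ _ inP(2) ws(1)] pf'[OF _ _ inP(2) ws(2)] unfolding SA_def FW1_def FW2_def by blast
      then show ?thesis ..
    next
      assume "FW2 s i"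
      then have "FW1 s (nx i)" using 1 pf'[OF _ _ inP(1) ws(1)] pf'[OF _ _ inP(1) ws(2)] pf'[OF _ _ inP(3) ws(1)] pf'[OF _ _ inP(3) ws(2)]
        unfolding SA_def FW1_def FW2_def by blast
      then show ?thesis ..
    qed
  next
    case 2
    show ?thesis using h
    proof
      assume "FW1 s i"
      then have "FW1 s (nx i)" using 2 pf'[OF _ _ inP(1) ws(1)] pf'[OF _ _ inP(1) ws(2)] pf'[OF _ _ inP(3) ws(1)] pf'[OF _ _ inP(3) ws(2)]
        unfolding SB_def FW1_def FW2_def by blast
      then show ?thesis ..
    next
      assume "FW2 s i"
      then have "FW2 s (nx i)" using 2 pf'[OF _ _ inP(2) ws(1)] pf'[OF _ _ inP(2) ws(2)] unfolding SB_def FW1_def FW2_def by blast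
      then show ?thesis ..
    qed
  qed
qed

lemma bw: assumes s: "s < k" and w: "w = a s \<or> w = c s"
  shows "Q < k \<Longrightarrow> Q \<noteq> s \<Longrightarrow> (A w (a Q) \<and> A w (c Q)) \<or> A w (b Q)"
proof (rule cyc_bwd[OF s, where Pr = "\<lambda>Q. (A w (a Q) \<and> A w (c Q)) \<or> A w (b Q)"])
  fix i assume i: "i < k" "nx i = s"
  show "(A w (a i) \<and> A w (c i)) \<or> A w (b i)" using step[OF i(1)] w i(2) unfolding SA_def SB_def by auto
next
  fix i assume i: "i < k" "i \<noteq> s" "nx i \<noteq> s" and h: "(A w (a (nx i)) \<and> A w (c (nx i))) \<or> A w (b (nx i))"
  have wP: "w \<in> P s" using w unfolding P_def by auto
  note pb' = pb[OF _ _ _ wP i(1) s i(2)]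
  consider "SA i" | "SB i" using step[OF i(1)] by blast
  then show "(A w (a i) \<and> A w (c i)) \<or> A w (b i)"
  proof cases
    case 1
    then show ?thesis using h pb'[OF _ _ inP(1)] pb'[OF _ _ inP(2)] pb'[OF _ _ inP(3)] unfolding SA_def by blast
  next
    case 2
    then show ?thesis using h pb'[OF _ _ inP(1)] pb'[OF _ _ inP(2)] pb'[OF _ _ inP(3)] unfolding SB_def by blast
  qed
qed

lemma exact: assumes s: "s < k" and w: "w = a s \<or> w = c s" and Q: "Q < k" "Q \<noteq> s"
  shows "(FW1 s Q \<and> A w (b Q)) \<or> (FW2 s Q \<and> A w (a Q) \<and> A w (c Q))"
  using fw[OF s Q] bw[OF s w Q] w asym unfolding FW1_def FW2_def by blast

end

context DC begin

definition t :: "nat \<Rightarrow> nat \<Rightarrow> bool" where "t s Q \<longleftrightarrow> A (a s) (a Q)"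

lemma tchar: assumes s: "s < k" and Q: "Q < k" "Q \<noteq> s"
  shows "t s Q \<longleftrightarrow> FW2 s Q" "\<not> t s Q \<longleftrightarrow> FW1 s Q"
  using exact[OF s _ Q, of "a s"] asym unfolding t_def FW1_def FW2_def by blast+

lemma texact: assumes s: "s < k" and w: "w = a s \<or> w = c s" and Q: "Q < k" "Q \<noteq> s"
  shows "t s Q \<Longrightarrow> A (b Q) w \<and> A w (a Q) \<and> A w (c Q)"
    "\<not> t s Q \<Longrightarrow> A (a Q) w \<and> A (c Q) w \<and> A w (b Q)"
  using exact[OF s w Q] tchar[OF s Q] w unfolding FW1_def FW2_def by blast+

lemma fwstep:
  assumes s: "s < k" and i: "i < k" "i \<noteq> s" "nx i \<noteq> s"
  shows "SA i \<Longrightarrow> (FW1 s i \<longrightarrow> FW2 s (nx i)) \<and> (FW2 s i \<longrightarrow> FW1 s (nx i))"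
    "SB i \<Longrightarrow> (FW1 s i \<longrightarrow> FW1 s (nx i)) \<and> (FW2 s i \<longrightarrow> FW2 s (nx i))"
proof -
  have j: "nx i < k" by (rule nx_lt)
  note pf' = pf[OF _ _ _ _ j s i(3)]
  have ws: "a s \<in> P s" "c s \<in> P s" by (rule inP)+
  show "SA i \<Longrightarrow> (FW1 s i \<longrightarrow> FW2 s (nx i)) \<and> (FW2 s i \<longrightarrow> FW1 s (nx i))"
    using pf'[OF _ _ inP(2) ws(1)] pf'[OF _ _ inP(2) ws(2)] pf'[OF _ _ inP(1) ws(1)] pf'[OF _ _ inP(1) ws(2)] pf'[OF _ _ inP(3) ws(1)] pf'[OF _ _ inP(3) ws(2)]
    unfolding SA_def FW1_def FW2_def by blast
  show "SB i \<Longrightarrow> (FW1 s i \<longrightarrow> FW1 s (nx i)) \<and> (FW2 s i \<longrightarrow> FW2 s (nx i))"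
    using pf'[OF _ _ inP(2) ws(1)] pf'[OF _ _ inP(2) ws(2)] pf'[OF _ _ inP(1) ws(1)] pf'[OF _ _ inP(1) ws(2)] pf'[OF _ _ inP(3) ws(1)] pf'[OF _ _ inP(3) ws(2)]
    unfolding SB_def FW1_def FW2_def by blast
qed

lemma cons:
  assumes s: "s < k" and i: "i < k" "i \<noteq> s" "nx i \<noteq> s"
  shows "SA i \<Longrightarrow> t s (nx i) \<longleftrightarrow> \<not> t s i" "SB i \<Longrightarrow> t s (nx i) \<longleftrightarrow> t s i"
  using fwstep[OF s i] tchar[OF s i(1,2)] tchar[OF s nx_lt i(3)] by blast+

lemma tbase: assumes s: "s < k" shows "t s (nx s) \<longleftrightarrow> SA s"
  using step[OF s] asym unfolding t_def SA_def SB_def by blast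

definition prev :: "nat \<Rightarrow> nat" where "prev Q = (Q + k - 1) mod k"

lemma prev: assumes "Q < k" shows "prev Q < k" "nx (prev Q) = Q"
proof -
  show "prev Q < k" unfolding prev_def using k2 by simp
  have "nx (prev Q) = Suc (Q + k - 1) mod k" unfolding nx_def prev_def by (simp add: mod_Suc_eq)
  also have "Suc (Q + k - 1) = Q + k" using k2 by simp
  also have "(Q + k) mod k = Q" using assms by simp
  finally show "nx (prev Q) = Q" .
qed

lemma Kset_P: "Kset k a b c = (\<Union>Q<k. P Q)" unfolding Kset_def P_def by simp

lemma inK: "Q < k \<Longrightarrow> a Q \<in> Kset k a b c \<and> b Q \<in> Kset k a b c \<and> c Q \<in> Kset k a b c"
  unfolding Kset_def by auto

lemma finK: "finite (Kset k a b c)" unfolding Kset_def by auto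

lemma card_dec: assumes "X \<subseteq> Kset k a b c" shows "card X = (\<Sum>Q<k. card (X \<inter> P Q))"
proof -
  have "X = (\<Union>Q<k. X \<inter> P Q)" using assms unfolding Kset_P by blast
  moreover have "card (\<Union>Q<k. X \<inter> P Q) = (\<Sum>Q<k. card (X \<inter> P Q))"
    by (rule card_UN_disjoint) (auto simp: P_def dest: disj)
  ultimately show ?thesis by simp
qed

end

context DC begin

abbreviation "KK \<equiv> Kset k a b c"

lemma finP: "finite (P Q)" unfolding P_def by simp

lemma outbound:
  assumes s: "s < k" and hw: "(w = a s \<and> \<not> A (a s) (c s)) \<or> (w = c s \<and> \<not> A (c s) (a s))" and Q: "Q < k"
  shows "card (outN KK A w \<inter> P Q) \<le> (if Q = s then 0 else if t s Q then 2 else 1)"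
proof -
  have w: "w = a s \<or> w = c s" using hw by blast
  show ?thesis
  proof (cases "Q = s")
    case True
    have "outN KK A w \<inter> P Q = {}" using True hw basic[OF s] irr unfolding outN_def P_def by auto
    then show ?thesis using True by simp
  next
    case False
    show ?thesis
    proof (cases "t s Q")
      case True
      have "outN KK A w \<inter> P Q \<subseteq> {a Q, c Q}" using texact(1)[OF s w Q False True] asym unfolding outN_def P_def by auto
      then have "card (outN KK A w \<inter> P Q) \<le> card {a Q, c Q}" by (rule card_mono[rotated]) simp
      also have "\<dots> \<le> 2" by (simp add: card_insert_if)
      finally show ?thesis using True False by simp
    next
      case f2: False
      have "outN KK A w \<inter> P Q \<subseteq> {b Q}" using texact(2)[OF s w Q False f2] asym unfolding outN_def P_def by auto
      then have "card (outN KK A w \<inter> P Q) \<le> card {b Q}" by (rule card_mono[rotated]) simp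
      then show ?thesis using f2 False by simp
    qed
  qed
qed

lemma secI: assumes "x \<in> KK" "\<not> A w x" "x \<noteq> w" "u \<in> KK" "A w u" "A u x"
  shows "x \<in> secN KK A w"
  using assms unfolding secN_def outN_def by auto

lemma secbound:
  assumes s: "s < k" and hw: "(w = a s \<and> \<not> A (a s) (c s)) \<or> (w = c s \<and> \<not> A (c s) (a s))" and Q: "Q < k"
  shows "(if Q = s then 1 else if Q = nx s then 0 else if t s Q then 1 else 2) \<le> card (secN KK A w \<inter> P Q)"
proof -
  have w: "w = a s \<or> w = c s" using hw by blast
  have fin: "finite (secN KK A w \<inter> P Q)" using finP by simp
  show ?thesis
  proof (cases "Q = s")
    case True
    have bs: "b s \<in> secN KK A w"
    proof (cases "SA s")
      case True
      show ?thesis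
        by (rule secI[where u = "a (nx s)"]) (use True w basic[OF s] inK[OF s] inK[OF nx_lt] in \<open>auto simp: SA_def\<close>)
    next
      case False
      then have "SB s" using step[OF s] by blast
      show ?thesis
        by (rule secI[where u = "b (nx s)"]) (use \<open>SB s\<close> w basic[OF s] inK[OF s] inK[OF nx_lt] in \<open>auto simp: SB_def\<close>)
    qed
    then have "b s \<in> secN KK A w \<inter> P Q" using True inP by auto
    then have "1 \<le> card (secN KK A w \<inter> P Q)" using fin by (metis One_nat_def Suc_leI card_gt_0_iff empty_iff)
    then show ?thesis using True by simp
  next
    case Qs: False
    show ?thesis
    proof (cases "Q = nx s")
      case True then show ?thesis using Qs by simp
    next
      case Qn: False
      define p where "p = prev Q"
      have p: "p < k" "nx p = Q" using prev[OF Q] unfolding p_def by auto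
      have ps: "p \<noteq> s" using p(2) Qn by auto
      have pn: "nx p \<noteq> s" using p(2) Qs by simp
      have cn: "SA p \<Longrightarrow> t s Q \<longleftrightarrow> \<not> t s p" "SB p \<Longrightarrow> t s Q \<longleftrightarrow> t s p"
        using cons[OF s p(1) ps pn] p(2) by auto
      note tp = texact[OF s w p(1) ps]
      note tq = texact[OF s w Q Qs]
      have wne: "\<And>x. x \<in> P Q \<Longrightarrow> x \<noteq> w" using neq[OF Q s Qs] w inP by blast
      show ?thesis
      proof (cases "t s Q")
        case True
        have "b Q \<in> secN KK A w"
        proof (cases "SA p")
          case True
          show ?thesis
            by (rule secI[where u = "b p"]) (use True \<open>t s Q\<close> cn tp tq asym wne[OF inP(2)] inK[OF p(1)] inK[OF Q] p(2) in \<open>auto simp: SA_def\<close>)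
        next
          case False
          then have "SB p" using step[OF p(1)] by blast
          show ?thesis
            by (rule secI[where u = "a p"]) (use \<open>SB p\<close> \<open>t s Q\<close> cn tp tq asym wne[OF inP(2)] inK[OF p(1)] inK[OF Q] p(2) in \<open>auto simp: SB_def\<close>)
        qed
        then have "b Q \<in> secN KK A w \<inter> P Q" using inP by auto
        then have "1 \<le> card (secN KK A w \<inter> P Q)" using fin by (metis One_nat_def Suc_leI card_gt_0_iff empty_iff)
        then show ?thesis using True Qs Qn by simp
      next
        case False
        have "a Q \<in> secN KK A w \<and> c Q \<in> secN KK A w"
        proof (cases "SA p")
          case True
          have "A w (a p)" "A (a p) (a Q)" "A (a p) (c Q)" using True \<open>\<not> t s Q\<close> cn tp p(2) unfolding SA_def by auto
          then show ?thesis using secI[where u = "a p"] \<open>\<not> t s Q\<close> tq asym wne[OF inP(1)] wne[OF inP(3)] inK[OF p(1)] inK[OF Q] by blast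
        next
          case False
          then have "SB p" using step[OF p(1)] by blast
          have "A w (b p)" "A (b p) (a Q)" "A (b p) (c Q)" using \<open>SB p\<close> \<open>\<not> t s Q\<close> cn tp p(2) unfolding SB_def by auto
          then show ?thesis using secI[where u = "b p"] \<open>\<not> t s Q\<close> tq asym wne[OF inP(1)] wne[OF inP(3)] inK[OF p(1)] inK[OF Q] by blast
        qed
        then have "{a Q, c Q} \<subseteq> secN KK A w \<inter> P Q" using inP by auto
        then have "card {a Q, c Q} \<le> card (secN KK A w \<inter> P Q)" using fin by (rule card_mono[rotated])
        moreover have "card {a Q, c Q} = 2" using basic[OF Q] by simp
        ultimately show ?thesis using False Qs Qn by simp
      qed
    qed
  qed
qed

end

context DC begin

lemma L1: "s < k \<Longrightarrow> (\<Sum>Q<k. if Q = s then 0 else 1::nat) = k - 1"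
proof -
  assume s: "s < k"
  have "{..<k} \<inter> - {s} = {..<k} - {s}" by auto
  then show ?thesis using s by (simp add: sum.If_cases card_Diff_singleton)
qed

lemma L2: "(\<Sum>Q<k. if p Q then 1 else 0::nat) = card {Q. Q < k \<and> p Q}"
proof -
  have "(\<Sum>Q<k. if p Q then 1 else 0::nat) = card ({..<k} \<inter> {Q. p Q})" by (simp add: sum.If_cases)
  also have "{..<k} \<inter> {Q. p Q} = {Q. Q < k \<and> p Q}" by auto
  finally show ?thesis .
qed

lemma mainL:
  assumes s: "s < k" and hw: "(w = a s \<and> \<not> A (a s) (c s)) \<or> (w = c s \<and> \<not> A (c s) (a s))"
    and cond: "(SA s \<and> 2 * card {Q. Q < k \<and> t s Q} \<le> k - 1) \<or> (\<not> SA s \<and> 2 * card {Q. Q < k \<and> t s Q} + 2 \<le> k)"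
  shows "card (outN KK A w) \<le> card (secN KK A w)"
proof -
  define oo where "oo = card {Q. Q < k \<and> t s Q}"
  define g where "g Q = (if Q = s then 0 else if t s Q then 2 else 1::nat)" for Q
  define h where "h Q = (if Q = s then 1 else if Q = nx s then 0 else if t s Q then 1 else 2::nat)" for Q
  define h' where "h' Q = (if Q = s then 1 else if t s Q then 1 else 2::nat)" for Q
  define \<delta> where "\<delta> = (if SA s then 1 else 2::nat)"
  have ts: "\<not> t s s" unfolding t_def using irr by simp
  have c1: "card (outN KK A w) \<le> sum g {..<k}"
  proof -
    have "card (outN KK A w) = (\<Sum>Q<k. card (outN KK A w \<inter> P Q))"
      by (rule card_dec) (auto simp: outN_def)
    also have "\<dots> \<le> sum g {..<k}" unfolding g_def by (rule sum_mono) (use outbound[OF s hw] in auto)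
    finally show ?thesis .
  qed
  have c2: "sum h {..<k} \<le> card (secN KK A w)"
  proof -
    have "sum h {..<k} \<le> (\<Sum>Q<k. card (secN KK A w \<inter> P Q))" unfolding h_def by (rule sum_mono) (use secbound[OF s hw] in auto)
    also have "\<dots> = card (secN KK A w)"
      by (rule card_dec[symmetric]) (auto simp: secN_def)
    finally show ?thesis .
  qed
  have G: "sum g {..<k} = (k - 1) + oo"
  proof -
    have "sum g {..<k} = (\<Sum>Q<k. (if Q = s then 0 else 1) + (if t s Q then 1 else 0))"
      by (rule sum.cong) (auto simp: g_def ts)
    also have "\<dots> = (k - 1) + oo" unfolding sum.distrib L1[OF s] L2 oo_def ..
    finally show ?thesis .
  qed
  have H1: "sum h' {..<k} + oo = k + (k - 1)"
  proof -
    have "sum h' {..<k} + oo = (\<Sum>Q<k. h' Q + (if t s Q then 1 else 0))" unfolding sum.distrib L2 oo_def ..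
    also have "\<dots> = (\<Sum>Q<k. 1 + (if Q = s then 0 else 1))" by (rule sum.cong) (auto simp: h'_def ts)
    also have "\<dots> = k + (k - 1)" unfolding sum.distrib L1[OF s] by simp
    finally show ?thesis .
  qed
  have H2: "sum h {..<k} + \<delta> = sum h' {..<k}"
  proof -
    have n: "nx s \<in> {..<k}" "nx s \<noteq> s" using nx_lt nx_neq[OF s] by auto
    have "sum h' {..<k} = h' (nx s) + sum h' ({..<k} - {nx s})" by (rule sum.remove) (use n in auto)
    moreover have "sum h {..<k} = h (nx s) + sum h ({..<k} - {nx s})" by (rule sum.remove) (use n in auto)
    moreover have "sum h ({..<k} - {nx s}) = sum h' ({..<k} - {nx s})" by (rule sum.cong) (auto simp: h_def h'_def)
    moreover have "h' (nx s) = \<delta> + h (nx s)" using n tbase[OF s] unfolding h_def h'_def \<delta>_def by auto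
    ultimately show ?thesis by simp
  qed
  have "sum g {..<k} \<le> sum h {..<k}"
    using G H1 H2 cond k2 unfolding oo_def[symmetric] \<delta>_def by (cases "SA s") auto
  then show ?thesis using c1 c2 by linarith
qed

end

context DC begin

lemma existsSA: "\<exists>s<k. SA s"
proof (rule ccontr)
  assume "\<not> (\<exists>s<k. SA s)"
  then have nSA: "\<And>s. s < k \<Longrightarrow> \<not> SA s" by blast
  have k0: "0 < k" using k2 by simp
  have all: "\<And>Q. Q < k \<Longrightarrow> Q \<noteq> 0 \<Longrightarrow> \<not> t 0 Q"
  proof (rule cyc_fwd[OF k0, where Pr = "\<lambda>Q. \<not> t 0 Q"])
    show "\<not> t 0 (nx 0)" using tbase[OF k0] nSA[OF k0] by simp
  next
    fix i assume i: "i < k" "i \<noteq> 0" "nx i \<noteq> 0" "\<not> t 0 i"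
    have "SB i" using step[OF i(1)] nSA[OF i(1)] by blast
    then show "\<not> t 0 (nx i)" using cons(2)[OF k0 i(1-3)] i(4) by simp
  qed
  define q where "q = prev 0"
  have q: "q < k" "nx q = 0" using prev[OF k0] unfolding q_def by auto
  have q0: "q \<noteq> 0"
  proof
    assume "q = 0" then show False using q(2) nx_neq[OF k0] by simp
  qed
  have "SB q" using step[OF q(1)] nSA[OF q(1)] by blast
  then have "A (a 0) (a q)" using q(2) unfolding SB_def by simp
  then show False using all[OF q(1) q0] unfolding t_def by simp
qed

lemma pairs: "2 * (\<Sum>s<k. card {Q. Q < k \<and> t s Q}) = k * k - k"
proof -
  define R where "R = {(s, Q). s < k \<and> Q < k \<and> A (a s) (a Q)}"
  define R' where "R' = {(s, Q). s < k \<and> Q < k \<and> A (a Q) (a s)}"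
  define Off where "Off = ({..<k} \<times> {..<k}) - (\<lambda>i. (i, i)) ` {..<k}"
  have S: "(\<Sum>s<k. card {Q. Q < k \<and> t s Q}) = card R"
  proof -
    have "R = (SIGMA s:{..<k}. {Q. Q < k \<and> t s Q})" unfolding R_def t_def by auto
    then show ?thesis by simp
  qed
  have fin: "finite R" "finite R'" unfolding R_def R'_def
    by (rule finite_subset[of _ "{..<k} \<times> {..<k}"], auto)+
  have sw: "R' = prod.swap ` R" unfolding R_def R'_def by auto
  have cR': "card R' = card R" unfolding sw by (rule card_image) (metis inj_on_def swap_swap)
  have un: "R \<union> R' = Off"
  proof
    show "R \<union> R' \<subseteq> Off" unfolding R_def R'_def Off_def using irr by auto
    show "Off \<subseteq> R \<union> R'"
    proof
      fix x assume "x \<in> Off"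
      then obtain s Q where x: "x = (s, Q)" "s < k" "Q < k" "s \<noteq> Q" unfolding Off_def by auto
      then have "A (a s) (a Q) \<or> A (a Q) (a s)" using adj[OF x(2,3,4) inP(1) inP(1)] by simp
      then show "x \<in> R \<union> R'" unfolding R_def R'_def using x by auto
    qed
  qed
  have int: "R \<inter> R' = {}" unfolding R_def R'_def using asym by auto
  have "card Off = k * k - k"
  proof -
    have "card Off = card ({..<k} \<times> {..<k}) - card ((\<lambda>i. (i, i)) ` {..<k})"
      unfolding Off_def by (rule card_Diff_subset) auto
    moreover have "card ((\<lambda>i. (i, i)) ` {..<k}) = k" by (subst card_image) (auto simp: inj_on_def)
    ultimately show ?thesis by (simp add: card_cartesian_product)
  qed
  moreover have "card (R \<union> R') = card R + card R'" using card_Un_disjoint[OF fin int] .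
  ultimately show ?thesis using S un cR' by simp
qed

lemma choose_s: "\<exists>s<k. (SA s \<and> 2 * card {Q. Q < k \<and> t s Q} \<le> k - 1) \<or> (\<not> SA s \<and> 2 * card {Q. Q < k \<and> t s Q} + 2 \<le> k)"
proof (rule ccontr)
  assume "\<not> ?thesis"
  then have h: "\<And>s. s < k \<Longrightarrow> (k - 1) + (if SA s then 1 else 0) \<le> 2 * card {Q. Q < k \<and> t s Q}"
    by fastforce
  have "(\<Sum>s<k. (k - 1) + (if SA s then 1 else 0::nat)) \<le> (\<Sum>s<k. 2 * card {Q. Q < k \<and> t s Q})"
    by (rule sum_mono) (use h in auto)
  also have "\<dots> = k * k - k" using pairs by (simp add: sum_distrib_left)
  finally have "k * (k - 1) + card {s. s < k \<and> SA s} \<le> k * k - k" unfolding sum.distrib L2 by simp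
  moreover have "card {s. s < k \<and> SA s} \<ge> 1"
  proof -
    obtain s where "s < k" "SA s" using existsSA by blast
    then have "{s. s < k \<and> SA s} \<noteq> {}" by blast
    moreover have "finite {s. s < k \<and> SA s}" by simp
    ultimately show ?thesis by (simp add: Suc_leI card_gt_0_iff)
  qed
  moreover have "k * (k - 1) = k * k - k" by (simp add: diff_mult_distrib2)
  ultimately show False by linarith
qed

end

theorem proposition4p11:
  fixes V :: "'v set" and A :: "'v \<Rightarrow> 'v \<Rightarrow> bool"
    and k :: nat and a b c :: "nat \<Rightarrow> 'v"
  assumes "tournament_missing_P2s V A"
    and "double_cycle V A k a b c"
  shows "\<exists>s<k. card (outN (Kset k a b c) A (a s)) \<le> card (secN (Kset k a b c) A (a s))
             \<or> card (outN (Kset k a b c) A (c s)) \<le> card (secN (Kset k a b c) A (c s))"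
proof -
  interpret DC V A k a b c using assms by unfold_locales
  obtain s where s: "s < k" and cond: "(SA s \<and> 2 * card {Q. Q < k \<and> t s Q} \<le> k - 1) \<or> (\<not> SA s \<and> 2 * card {Q. Q < k \<and> t s Q} + 2 \<le> k)"
    using choose_s by blast
  show ?thesis
  proof (cases "A (a s) (c s)")
    case False
    then have "card (outN (Kset k a b c) A (a s)) \<le> card (secN (Kset k a b c) A (a s))"
      using mainL[OF s _ cond, of "a s"] by blast
    then show ?thesis using s by blast
  next
    case True
    then have "\<not> A (c s) (a s)" using asym by blast
    then have "card (outN (Kset k a b c) A (c s)) \<le> card (secN (Kset k a b c) A (c s))"
      using mainL[OF s _ cond, of "c s"] by blast
    then show ?thesis using s by blast
  qed
qed


end
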